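(* Let $\mathcal{L}$ be the Laplace operator on the real Euclidean space of $d\times d$ Hermitian matrices $M=(z_{ij})$ endowed with the inner product $\langle A,B\rangle=\mathrm{trace}(AB)$ (the generator of a Brownian Hermitian matrix), with carré du champ $\Gamma$ (extended complex-bilinearly to complex-valued functions), so that $\mathcal{L}(z_{ij})=0$. Let $P(X)=\det(X\,\mathrm{Id}-M)$. Then $$\Gamma\big(P(X),P(Y)\big)=\frac{1}{Y-X}\big(P'(X)P(Y)-P'(Y)P(X)\big),\qquad \mathcal{L}\big(P(X)\big)=-P''(X).$$
   Context: The carré du champ of a diffusion operator $\mathcal{L}$ is $\Gamma(f,g)=\frac12\big(\mathcal{L}(fg)-f\mathcal{L}g-g\mathcal{L}f\big)$. For this Laplacian one has $\Gamma(z_{ij},z_{kl})=\delta_{il}\delta_{jk}$ and $\Gamma(z_{ij},\bar z_{kl})=\delta_{ik}\delta_{jl}$. Derivatives $P'$, $P''$ are with respect to $X$. *)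

theory Defs
  imports "HOL-Analysis.Analysis"
begin

text \<open>Complex d x d matrices, with d = CARD('n). Hermitian matrices form the
real Euclidean space on which the Laplacian acts.\<close>

definition hermitian :: "complex^'n^'n \<Rightarrow> bool" where
  "hermitian M \<longleftrightarrow> (\<forall>i j. M $ i $ j = cnj (M $ j $ i))"

definition elem_mat :: "'n \<Rightarrow> 'n \<Rightarrow> complex^'n^'n" where
  "elem_mat i j = (\<chi> a b. if a = i \<and> b = j then 1 else 0)"

definition dir_d2 :: "(complex^'n^'n \<Rightarrow> complex) \<Rightarrow> complex^'n^'n \<Rightarrow> complex^'n^'n \<Rightarrow> complex" where
  "dir_d2 f M H =
     vector_derivative (\<lambda>t. vector_derivative (\<lambda>s. f (M + s *\<^sub>R H)) (at t)) (at 0)"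

text \<open>Laplacian on Hermitian matrices with inner product trace(AB), i.e. the sum of
second directional derivatives along the orthonormal basis
E_ii, (E_ij + E_ji)/sqrt 2, i(E_ij - E_ji)/sqrt 2 (i < j).  Each off-diagonal
pair {i,j} is counted once via the factor 1/2 over ordered pairs i \<noteq> j
(the directions for (j,i) coincide up to sign with those for (i,j)).\<close>
definition hlaplacian :: "(complex^'n^'n \<Rightarrow> complex) \<Rightarrow> complex^'n^'n \<Rightarrow> complex" where
  "hlaplacian f M =
     (\<Sum>i\<in>UNIV. dir_d2 f M (elem_mat i i))
     + (1/2) * (\<Sum>(i,j)\<in>{(i,j). i \<noteq> j}.
          dir_d2 f M ((1 / sqrt 2) *\<^sub>R (elem_mat i j + elem_mat j i))
        + dir_d2 f M ((1 / sqrt 2) *\<^sub>R (\<chi> a b. \<i> * (elem_mat i j - elem_mat j i) $ a $ b)))"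

definition carre_du_champ ::
  "(complex^'n^'n \<Rightarrow> complex) \<Rightarrow> (complex^'n^'n \<Rightarrow> complex) \<Rightarrow> complex^'n^'n \<Rightarrow> complex" where
  "carre_du_champ f g M =
     (1/2) * (hlaplacian (\<lambda>N. f N * g N) M - f M * hlaplacian g M - g M * hlaplacian f M)"

definition charpoly_fun :: "complex \<Rightarrow> complex^'n^'n \<Rightarrow> complex" where
  "charpoly_fun X M = det (mat X - M)"

end

theory Submission
  imports Defs
begin


definition lp :: "'a set \<Rightarrow> ('a\<Rightarrow>complex) \<Rightarrow> ('a\<Rightarrow>complex) \<Rightarrow> complex \<Rightarrow> complex" where
  "lp S a b z = (\<Prod>i\<in>S. a i + z * b i)"
definition lp1 :: "'a set \<Rightarrow> ('a\<Rightarrow>complex) \<Rightarrow> ('a\<Rightarrow>complex) \<Rightarrow> complex \<Rightarrow> complex" where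
  "lp1 S a b z = (\<Sum>k\<in>S. b k * lp (S-{k}) a b z)"
definition lp2 :: "'a set \<Rightarrow> ('a\<Rightarrow>complex) \<Rightarrow> ('a\<Rightarrow>complex) \<Rightarrow> complex \<Rightarrow> complex" where
  "lp2 S a b z = (\<Sum>k\<in>S. b k * lp1 (S-{k}) a b z)"

lemma lp_deriv: "(lp S a b has_field_derivative lp1 S a b z) (at z)"
proof -
  have "((\<lambda>u. \<Prod>x\<in>S. a x + u * b x) has_field_derivative (\<Sum>x\<in>S. b x * (\<Prod>y\<in>S-{x}. a y + z * b y))) (at z)"
    by (rule has_field_derivative_prod) (auto intro!: derivative_eq_intros)
  then show ?thesis unfolding lp_def[abs_def] lp1_def by simp
qed

lemma lp1_deriv: "(lp1 S a b has_field_derivative lp2 S a b z) (at z)"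
proof -
  have "((\<lambda>u. \<Sum>k\<in>S. b k * lp (S-{k}) a b u) has_field_derivative (\<Sum>k\<in>S. b k * lp1 (S-{k}) a b z)) (at z)"
    by (intro DERIV_sum DERIV_cmult lp_deriv)
  then show ?thesis unfolding lp1_def[abs_def] lp2_def by simp
qed

definition Fd :: "complex^'n^'n \<Rightarrow> complex^'n^'n \<Rightarrow> complex \<Rightarrow> complex" where
  "Fd C H z = (\<Sum>p | p permutes (UNIV::'n set). of_int (sign p) * lp UNIV (\<lambda>i. C$i$p i) (\<lambda>i. - H$i$p i) z)"
definition Fd1 :: "complex^'n^'n \<Rightarrow> complex^'n^'n \<Rightarrow> complex \<Rightarrow> complex" where
  "Fd1 C H z = (\<Sum>p | p permutes (UNIV::'n set). of_int (sign p) * lp1 UNIV (\<lambda>i. C$i$p i) (\<lambda>i. - H$i$p i) z)"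
definition Fd2 :: "complex^'n^'n \<Rightarrow> complex^'n^'n \<Rightarrow> complex \<Rightarrow> complex" where
  "Fd2 C H z = (\<Sum>p | p permutes (UNIV::'n set). of_int (sign p) * lp2 UNIV (\<lambda>i. C$i$p i) (\<lambda>i. - H$i$p i) z)"

lemma Fd_deriv: "(Fd C H has_field_derivative Fd1 C H z) (at z)"
  unfolding Fd_def[abs_def] Fd1_def by (intro DERIV_sum DERIV_cmult lp_deriv)
lemma Fd1_deriv: "(Fd1 C H has_field_derivative Fd2 C H z) (at z)"
  unfolding Fd1_def[abs_def] Fd2_def by (intro DERIV_sum DERIV_cmult lp1_deriv)

lemma dir_d2_eq:
  assumes "\<And>s. f (M + s *\<^sub>R H) = F (of_real s)"
    and "\<And>z. (F has_field_derivative F1 z) (at z)"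
    and "\<And>z. (F1 has_field_derivative F2 z) (at z)"
  shows "dir_d2 f M H = F2 0"
proof -
  have "vector_derivative (\<lambda>s. f (M + s *\<^sub>R H)) (at t) = F1 (of_real t)" for t
    unfolding assms(1) by (rule vector_derivative_at, rule has_vector_derivative_real_field, rule assms(2))
  then have "dir_d2 f M H = vector_derivative (\<lambda>t. F1 (of_real t)) (at 0)"
    unfolding dir_d2_def by simp
  also have "\<dots> = F2 (of_real 0)"
    by (rule vector_derivative_at, rule has_vector_derivative_real_field, rule assms(3))
  finally show ?thesis by simp
qed

lemma charpoly_entry: "(mat X - (M + s *\<^sub>R H)) $ i $ j = (mat X - M)$i$j + of_real s * - H$i$j"
  by (simp only: vector_minus_component vector_add_component vector_scaleR_component) (simp add: scaleR_conv_of_real)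

lemma charpoly_Fd: "charpoly_fun X (M + s *\<^sub>R H) = Fd (mat X - M) H (of_real s)"
  unfolding charpoly_fun_def det_def Fd_def lp_def charpoly_entry ..

lemma dir_d2_charpoly: "dir_d2 (charpoly_fun X) M H = Fd2 (mat X - M) H 0"
  by (rule dir_d2_eq[OF charpoly_Fd Fd_deriv Fd1_deriv])

lemma dir_d2_charpoly2: "dir_d2 (\<lambda>N. charpoly_fun X N * charpoly_fun Y N) M H =
   Fd2 (mat X - M) H 0 * Fd (mat Y - M) H 0 + 2 * (Fd1 (mat X - M) H 0 * Fd1 (mat Y - M) H 0)
   + Fd (mat X - M) H 0 * Fd2 (mat Y - M) H 0"
proof -
  let ?A = "mat X - M" and ?B = "mat Y - M"
  have d1: "((\<lambda>z. Fd ?A H z * Fd ?B H z) has_field_derivative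
      (Fd1 ?A H z * Fd ?B H z + Fd ?A H z * Fd1 ?B H z)) (at z)" for z
    by (auto intro!: derivative_eq_intros Fd_deriv)
  have d2: "((\<lambda>z. Fd1 ?A H z * Fd ?B H z + Fd ?A H z * Fd1 ?B H z) has_field_derivative
      (Fd2 ?A H z * Fd ?B H z + 2 * (Fd1 ?A H z * Fd1 ?B H z) + Fd ?A H z * Fd2 ?B H z)) (at z)" for z
    by (auto intro!: derivative_eq_intros Fd_deriv Fd1_deriv simp: algebra_simps)
  show ?thesis
    by (rule dir_d2_eq[OF _ d1 d2]) (simp add: charpoly_Fd)
qed



definition lapsum :: "(complex^'n^'n \<Rightarrow> complex) \<Rightarrow> complex" where
  "lapsum \<phi> =
     (\<Sum>i\<in>UNIV. \<phi> (elem_mat i i))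
     + (1/2) * (\<Sum>(i,j)\<in>{(i,j). i \<noteq> j}.
          \<phi> ((1 / sqrt 2) *\<^sub>R (elem_mat i j + elem_mat j i))
        + \<phi> ((1 / sqrt 2) *\<^sub>R (\<chi> a b. \<i> * (elem_mat i j - elem_mat j i) $ a $ b)))"

lemma hlap_lapsum: "hlaplacian f M = lapsum (dir_d2 f M)"
  unfolding hlaplacian_def lapsum_def ..

lemma lapsum_add: "lapsum (\<lambda>H. \<phi> H + \<psi> H) = lapsum \<phi> + lapsum \<psi>"
  unfolding lapsum_def by (simp add: sum.distrib case_prod_beta algebra_simps)

lemma lapsum_cmult: "lapsum (\<lambda>H. c * \<phi> H) = c * lapsum \<phi>"
  unfolding lapsum_def by (simp add: sum_distrib_left case_prod_beta algebra_simps)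

lemma lapsum_sum: "lapsum (\<lambda>H. \<Sum>x\<in>S. \<phi> x H) = (\<Sum>x\<in>S. lapsum (\<phi> x))"
proof (cases "finite S")
  case True
  then show ?thesis
    by (induction S rule: finite_induct) (auto simp: lapsum_add lapsum_cmult[where c=0, simplified])
next
  case False
  then show ?thesis using lapsum_cmult[where c=0 and \<phi>="\<lambda>_. 0"] by simp
qed

lemma entries:
  "elem_mat i j $ a $ b = (if a = i \<and> b = j then 1 else 0)"
  "((1 / sqrt 2) *\<^sub>R (elem_mat i j + elem_mat j i)) $ a $ b =
     of_real (1/sqrt 2) * ((if a = i \<and> b = j then 1 else 0) + (if a = j \<and> b = i then 1 else 0))"
  "((1 / sqrt 2) *\<^sub>R (\<chi> a b. \<i> * (elem_mat i j - elem_mat j i) $ a $ b)) $ a $ b =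
     of_real (1/sqrt 2) * \<i> * ((if a = i \<and> b = j then 1 else 0) - (if a = j \<and> b = i then 1 else 0))"
  by (simp_all only: vector_scaleR_component vector_add_component vector_minus_component vec_lambda_beta)
     (simp_all add: elem_mat_def scaleR_conv_of_real)

lemma sq2: "(complex_of_real (1 / sqrt 2))^2 = 1/2"
  by (simp add: power_divide flip: of_real_power)

lemma diag_aux: "(if (a::'n) = i \<and> b = i then (1::complex) else 0) * (if c = i \<and> d = i then 1 else 0) = (if i = a then (if a = b \<and> c = a \<and> d = a then 1 else 0) else 0)"
  by simp

lemma lapsum_entry:
  fixes a b c d :: "'n::finite"
  shows "lapsum (\<lambda>H. H$a$b * H$c$d) = (if a = d \<and> b = c then 1 else 0)"
proof -
  define e :: "'n \<Rightarrow> 'n \<Rightarrow> 'n \<Rightarrow> 'n \<Rightarrow> complex" where "e = (\<lambda>a b i j. if a = i \<and> b = j then (1::complex) else 0)"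
  have pair: "(1/2) * (((1 / sqrt 2) *\<^sub>R (elem_mat i j + elem_mat j i)) $ a $ b * ((1 / sqrt 2) *\<^sub>R (elem_mat i j + elem_mat j i)) $ c $ d
     + ((1 / sqrt 2) *\<^sub>R (\<chi> a b. \<i> * (elem_mat i j - elem_mat j i) $ a $ b)) $ a $ b *
       ((1 / sqrt 2) *\<^sub>R (\<chi> a b. \<i> * (elem_mat i j - elem_mat j i) $ a $ b)) $ c $ d)
     = (1/2) * (e a b i j * e c d j i + e a b j i * e c d i j)" for i j
  proof -
    have "(1/2) * (((1 / sqrt 2) *\<^sub>R (elem_mat i j + elem_mat j i)) $ a $ b * ((1 / sqrt 2) *\<^sub>R (elem_mat i j + elem_mat j i)) $ c $ d
     + ((1 / sqrt 2) *\<^sub>R (\<chi> a b. \<i> * (elem_mat i j - elem_mat j i) $ a $ b)) $ a $ b *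
       ((1 / sqrt 2) *\<^sub>R (\<chi> a b. \<i> * (elem_mat i j - elem_mat j i) $ a $ b)) $ c $ d)
      = (1/2) * ((complex_of_real (1 / sqrt 2))^2 * ((e a b i j + e a b j i) * (e c d i j + e c d j i)
           - (e a b i j - e a b j i) * (e c d i j - e c d j i)))"
      unfolding entries e_def by (simp add: power2_eq_square algebra_simps)
    also have "\<dots> = (1/2) * (e a b i j * e c d j i + e a b j i * e c d i j)"
      unfolding sq2 by (simp add: algebra_simps)
    finally show ?thesis .
  qed
  have "lapsum (\<lambda>H. H$a$b * H$c$d) = (\<Sum>i\<in>UNIV. e a b i i * e c d i i)
     + (1/2) * (\<Sum>(i,j)\<in>{(i,j). i \<noteq> j}. (e a b i j * e c d j i + e a b j i * e c d i j))"
    unfolding lapsum_def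
    apply (subst sum_distrib_left, subst sum_distrib_left)
    apply (intro arg_cong2[where f="(+)"] sum.cong refl)
     apply (simp add: entries e_def)
    apply (clarify)
    subgoal for i j using pair[of i j] by simp
    done
  also have "(\<Sum>i\<in>UNIV. e a b i i * e c d i i) = (if a = b \<and> c = a \<and> d = a then 1 else 0)"
  proof -
    have "(\<Sum>i\<in>UNIV. e a b i i * e c d i i) = (\<Sum>i\<in>UNIV. if i = a then (if a = b \<and> c = a \<and> d = a then 1 else 0) else 0)"
      unfolding e_def diag_aux ..
    then show ?thesis by simp
  qed
  also have "(\<Sum>(i,j)\<in>{(i,j). i \<noteq> j}. (e a b i j * e c d j i + e a b j i * e c d i j))
       = (\<Sum>x\<in>{(i,j). i \<noteq> j}. (if x = (a,b) then (if c = b \<and> d = a then 1 else 0) else 0)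
           + (if x = (b,a) then (if c = b \<and> d = a then 1 else 0) else 0))"
  proof (rule sum.cong[OF refl])
    fix x :: "'n \<times> 'n"
    obtain i j where x: "x = (i,j)" by (cases x)
    have h1: "e a b i j * e c d j i = (if (i,j) = (a,b) then (if c = b \<and> d = a then 1 else 0) else 0)"
      by (simp add: e_def)
    have h2: "e a b j i * e c d i j = (if (i,j) = (b,a) then (if c = b \<and> d = a then 1 else 0) else 0)"
      by (simp add: e_def)
    show "(case x of (i,j) \<Rightarrow> e a b i j * e c d j i + e a b j i * e c d i j) =
       (if x = (a,b) then (if c = b \<and> d = a then 1 else 0) else 0)
           + (if x = (b,a) then (if c = b \<and> d = a then 1 else 0) else 0)"
      unfolding x prod.case h1 h2 ..
  qed
  also have "\<dots> = 2 * (if a \<noteq> b \<and> c = b \<and> d = a then 1 else 0)"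
    by (simp only: sum.distrib sum.delta finite) auto
  finally show ?thesis by (cases "a = b"; cases "c = b"; cases "d = a"; simp)
qed



abbreviation Perms :: "('n::finite \<Rightarrow> 'n) set" where "Perms \<equiv> {p. p permutes (UNIV::'n set)}"

definition tt :: "complex^'n^'n \<Rightarrow> ('n::finite \<Rightarrow> 'n) \<Rightarrow> 'n \<Rightarrow> complex" where
  "tt C p k = of_int (sign p) * (\<Prod>i\<in>UNIV-{k}. C$i$p i)"

lemma Fd_0: "Fd C H 0 = det C"
  unfolding Fd_def det_def lp_def by simp

lemma Fd1_0: "Fd1 C H 0 = (\<Sum>p\<in>Perms. \<Sum>k\<in>UNIV. (- tt C p k) * H$k$(p k))"
  unfolding Fd1_def lp1_def lp_def tt_def
  by (simp add: sum_distrib_left mult_ac)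

lemma Fd2_0: "Fd2 C H 0 = (\<Sum>p\<in>Perms. \<Sum>k\<in>UNIV. \<Sum>l\<in>UNIV-{k}.
     (of_int (sign p) * (\<Prod>i\<in>UNIV-{k}-{l}. C$i$p i)) * (H$k$(p k) * H$l$(p l)))"
  unfolding Fd2_def lp2_def lp1_def lp_def
  by (simp add: sum_distrib_left mult_ac)

lemma lapsum_bilin:
  "lapsum (\<lambda>H. (\<Sum>p\<in>P. \<Sum>k\<in>K. \<alpha> p k * H$k$(f p k)) * (\<Sum>q\<in>Q. \<Sum>l\<in>L. \<beta> q l * H$l$(g q l)))
   = (\<Sum>p\<in>P. \<Sum>k\<in>K. \<Sum>q\<in>Q. \<Sum>l\<in>L. \<alpha> p k * \<beta> q l * (if k = g q l \<and> f p k = l then 1 else 0))"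
proof -
  have "\<And>H. (\<Sum>p\<in>P. \<Sum>k\<in>K. \<alpha> p k * H$k$(f p k)) * (\<Sum>q\<in>Q. \<Sum>l\<in>L. \<beta> q l * H$l$(g q l))
     = (\<Sum>p\<in>P. \<Sum>k\<in>K. \<Sum>q\<in>Q. \<Sum>l\<in>L. (\<alpha> p k * \<beta> q l) * (H$k$(f p k) * H$l$(g q l)))"
    unfolding sum_distrib_right unfolding sum_distrib_left by (simp only: mult_ac)
  then show ?thesis
    by (simp only: lapsum_sum lapsum_cmult lapsum_entry)
qed

lemma lapsum_quad:
  "lapsum (\<lambda>H. (\<Sum>p\<in>P. \<Sum>k\<in>K. \<Sum>l\<in>L k. \<gamma> p k l * (H$k$(f p k) * H$l$(f p l))))
   = (\<Sum>p\<in>P. \<Sum>k\<in>K. \<Sum>l\<in>L k. \<gamma> p k l * (if k = f p l \<and> f p k = l then 1 else 0))"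
  by (simp only: lapsum_sum lapsum_cmult lapsum_entry)



definition DD :: "complex^'n^'n \<Rightarrow> 'n::finite \<Rightarrow> 'n \<Rightarrow> complex" where
  "DD A k l = (\<Sum>p\<in>Perms. if p k = l then tt A p k else 0)"

lemma row_exp: "(\<Sum>l\<in>UNIV. A$j$l * DD A k l) = (if j = k then det A else 0)"
proof -
  have "(\<Sum>l\<in>UNIV. A$j$l * DD A k l) = (\<Sum>l\<in>UNIV. \<Sum>p\<in>Perms. if p k = l then A$j$l * tt A p k else 0)"
    unfolding DD_def sum_distrib_left by (intro sum.cong refl) auto
  also have "\<dots> = (\<Sum>p\<in>Perms. \<Sum>l\<in>UNIV. if p k = l then A$j$l * tt A p k else 0)"
    by (rule sum.swap)
  also have "\<dots> = (\<Sum>p\<in>Perms. A$j$(p k) * tt A p k)"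
    by simp
  finally have L: "(\<Sum>l\<in>UNIV. A$j$l * DD A k l) = (\<Sum>p\<in>Perms. A$j$(p k) * tt A p k)" .
  define A' where "A' = (\<chi> i. if i = k then A$j else A$i)"
  have "det A' = (\<Sum>p\<in>Perms. of_int (sign p) * (A'$k$(p k) * (\<Prod>i\<in>UNIV-{k}. A'$i$(p i))))"
    unfolding det_def by (intro sum.cong refl) (simp add: prod.remove)
  also have "\<dots> = (\<Sum>p\<in>Perms. A$j$(p k) * tt A p k)"
    unfolding tt_def A'_def by (intro sum.cong refl) (simp add: mult_ac)
  finally have R: "det A' = (\<Sum>p\<in>Perms. A$j$(p k) * tt A p k)" .
  show ?thesis
  proof (cases "j = k")
    case True
    then have "A' = A" unfolding A'_def by (simp add: vec_eq_iff)
    then show ?thesis using L R True by simp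
  next
    case False
    have "row j A' = row k A'" unfolding A'_def row_def using False by (simp add: vec_eq_iff)
    then have "det A' = 0" using det_identical_rows[OF False] by blast
    then show ?thesis using L R False by simp
  qed
qed

lemma col_exp:
  fixes A :: "complex^'n^'n" and k l :: "'n::finite"
  shows "(\<Sum>j\<in>UNIV. A$j$l * DD A j k) = (if l = k then det A else 0)"
proof -
  have inv1: "p (inv p x) = x" "inv p (p x) = x" if "p \<in> Perms" for p :: "'n \<Rightarrow> 'n" and x
    using that permutes_inverses by auto
  have "(\<Sum>j\<in>UNIV. A$j$l * DD A j k) = (\<Sum>j\<in>UNIV. \<Sum>p\<in>Perms. if p j = k then A$j$l * tt A p j else 0)"
    unfolding DD_def sum_distrib_left by (intro sum.cong refl) auto
  also have "\<dots> = (\<Sum>p\<in>Perms. \<Sum>j\<in>UNIV. if p j = k then A$j$l * tt A p j else 0)"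
    by (rule sum.swap)
  also have "\<dots> = (\<Sum>p\<in>Perms. A$(inv p k)$l * tt A p (inv p k))"
  proof (rule sum.cong[OF refl])
    fix p :: "'n \<Rightarrow> 'n" assume p: "p \<in> Perms"
    have "(\<Sum>j\<in>UNIV. if p j = k then A$j$l * tt A p j else 0) = (\<Sum>j\<in>UNIV. if j = inv p k then A$j$l * tt A p j else 0)"
      by (rule sum.cong[OF refl]) (metis inv1[OF p])
    then show "(\<Sum>j\<in>UNIV. if p j = k then A$j$l * tt A p j else 0) = A$(inv p k)$l * tt A p (inv p k)"
      by simp
  qed
  finally have L: "(\<Sum>j\<in>UNIV. A$j$l * DD A j k) = (\<Sum>p\<in>Perms. A$(inv p k)$l * tt A p (inv p k))" .
  define A' where "A' = (\<chi> i m. if m = k then A$i$l else A$i$m)"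
  have "det A' = (\<Sum>p\<in>Perms. A$(inv p k)$l * tt A p (inv p k))"
    unfolding det_def
  proof (rule sum.cong[OF refl])
    fix p :: "'n \<Rightarrow> 'n" assume p: "p \<in> Perms"
    have "(\<Prod>i\<in>UNIV. A'$i$(p i)) = A'$(inv p k)$(p (inv p k)) * (\<Prod>i\<in>UNIV-{inv p k}. A'$i$(p i))"
      by (simp add: prod.remove)
    also have "(\<Prod>i\<in>UNIV-{inv p k}. A'$i$(p i)) = (\<Prod>i\<in>UNIV-{inv p k}. A$i$(p i))"
      by (rule prod.cong[OF refl]) (auto simp: A'_def dest: arg_cong[where f="inv p"] simp: inv1[OF p])
    finally show "of_int (sign p) * (\<Prod>i\<in>UNIV. A'$i$(p i)) = A$(inv p k)$l * tt A p (inv p k)"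
      unfolding tt_def by (simp add: A'_def inv1[OF p] mult_ac)
  qed
  note R = this
  show ?thesis
  proof (cases "l = k")
    case True
    then have "A' = A" unfolding A'_def by (simp add: vec_eq_iff)
    then show ?thesis using L R True by simp
  next
    case False
    have "column l A' = column k A'" unfolding A'_def column_def using False by (simp add: vec_eq_iff)
    then have "det A' = 0" using det_identical_columns[OF False] by blast
    then show ?thesis using L R False by simp
  qed
qed



lemma gamma_adj:
  fixes M :: "complex^'n^'n" and X Y :: complex
  defines "A \<equiv> mat X - M" and "B \<equiv> mat Y - M"
  shows "(Y - X) * (\<Sum>k\<in>UNIV. \<Sum>m\<in>UNIV. DD A m k * DD B k m)
       = det B * (\<Sum>k\<in>UNIV. DD A k k) - det A * (\<Sum>k\<in>UNIV. DD B k k)"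
proof -
  have BA: "B$j$m - A$j$m = (if j = m then Y - X else 0)" for j m
    unfolding A_def B_def by (simp add: mat_def)
  define S where "S = (\<Sum>k\<in>UNIV. \<Sum>m\<in>UNIV. \<Sum>j\<in>UNIV. DD A j k * (B$j$m - A$j$m) * DD B k m)"
  have "S = (\<Sum>k\<in>UNIV. \<Sum>m\<in>UNIV. (Y - X) * (DD A m k * DD B k m))"
    unfolding S_def BA by (intro sum.cong refl) (simp add: if_distrib[where f="\<lambda>x. x * _"] if_distrib[where f="\<lambda>x. _ * x"] cong: if_cong)
  also have "\<dots> = (Y - X) * (\<Sum>k\<in>UNIV. \<Sum>m\<in>UNIV. DD A m k * DD B k m)"
    by (simp add: sum_distrib_left)
  finally have S1: "S = (Y - X) * (\<Sum>k\<in>UNIV. \<Sum>m\<in>UNIV. DD A m k * DD B k m)" .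
  have "S = (\<Sum>k\<in>UNIV. \<Sum>m\<in>UNIV. \<Sum>j\<in>UNIV. DD A j k * (B$j$m * DD B k m))
          - (\<Sum>k\<in>UNIV. \<Sum>m\<in>UNIV. DD B k m * (\<Sum>j\<in>UNIV. A$j$m * DD A j k))"
    unfolding S_def sum_subtractf[symmetric] sum_distrib_left
    by (intro sum.cong refl) (simp add: algebra_simps)
  also have "(\<Sum>k\<in>UNIV. \<Sum>m\<in>UNIV. \<Sum>j\<in>UNIV. DD A j k * (B$j$m * DD B k m))
       = (\<Sum>k\<in>UNIV. \<Sum>j\<in>UNIV. DD A j k * (\<Sum>m\<in>UNIV. B$j$m * DD B k m))"
    unfolding sum_distrib_left by (rule sum.cong[OF refl], rule sum.swap)
  also have "\<dots> = (\<Sum>k\<in>UNIV. DD A k k * det B)"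
    unfolding row_exp by (simp add: if_distrib cong: if_cong)
  also have "(\<Sum>k\<in>UNIV. \<Sum>m\<in>UNIV. DD B k m * (\<Sum>j\<in>UNIV. A$j$m * DD A j k)) = (\<Sum>k\<in>UNIV. DD B k k * det A)"
    unfolding col_exp by (simp add: if_distrib cong: if_cong)
  finally have S2: "S = (\<Sum>k\<in>UNIV. DD A k k * det B) - (\<Sum>k\<in>UNIV. DD B k k * det A)" .
  show ?thesis using S1 S2 by (simp add: sum_distrib_left sum_distrib_right mult_ac)
qed



lemma cp_lp: "charpoly_fun x M = (\<Sum>p\<in>Perms. of_int (sign p) * lp UNIV (\<lambda>i. - M$i$p i) (\<lambda>i. if i = p i then 1 else 0) x)"
  unfolding charpoly_fun_def det_def lp_def
  by (intro sum.cong refl arg_cong2[where f="(*)"] prod.cong) (auto simp: mat_def)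

definition Q1 :: "complex^'n^'n \<Rightarrow> complex \<Rightarrow> complex" where
  "Q1 M x = (\<Sum>p\<in>Perms. of_int (sign p) * lp1 UNIV (\<lambda>i. - M$i$p i) (\<lambda>i. if i = p i then 1 else 0) x)"
definition Q2 :: "complex^'n^'n \<Rightarrow> complex \<Rightarrow> complex" where
  "Q2 M x = (\<Sum>p\<in>Perms. of_int (sign p) * lp2 UNIV (\<lambda>i. - M$i$p i) (\<lambda>i. if i = p i then 1 else 0) x)"

lemma cp_deriv: "deriv (\<lambda>x. charpoly_fun x M) = Q1 M"
proof
  fix x
  have "((\<lambda>x. charpoly_fun x M) has_field_derivative Q1 M x) (at x)"
    unfolding cp_lp Q1_def by (intro DERIV_sum DERIV_cmult lp_deriv)
  then show "deriv (\<lambda>x. charpoly_fun x M) x = Q1 M x" by (rule DERIV_imp_deriv)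
qed

lemma cp_deriv2: "deriv (deriv (\<lambda>x. charpoly_fun x M)) x = Q2 M x"
proof -
  have "(Q1 M has_field_derivative Q2 M x) (at x)"
    unfolding Q1_def[abs_def] Q2_def by (intro DERIV_sum DERIV_cmult lp1_deriv)
  then show ?thesis unfolding cp_deriv by (rule DERIV_imp_deriv)
qed

lemma mat_entry: fixes M :: "complex^'n^'n" and x :: complex shows "- M$i$p i + x * (if i = p i then 1 else 0) = (mat x - M)$i$(p i)"
  by (simp add: mat_def)

lemma Q1_eq: "Q1 M x = (\<Sum>k\<in>UNIV. DD (mat x - M) k k)"
proof -
  have "Q1 M x = (\<Sum>p\<in>Perms. \<Sum>k\<in>UNIV. if p k = k then tt (mat x - M) p k else 0)"
    unfolding Q1_def lp1_def lp_def mat_entry tt_def sum_distrib_left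
    by (intro sum.cong refl) auto
  also have "\<dots> = (\<Sum>k\<in>UNIV. DD (mat x - M) k k)"
    unfolding DD_def by (rule sum.swap)
  finally show ?thesis .
qed

definition W :: "complex^'n^'n \<Rightarrow> ('n::finite \<Rightarrow> 'n) \<Rightarrow> 'n \<Rightarrow> 'n \<Rightarrow> complex" where
  "W C p k l = of_int (sign p) * (\<Prod>i\<in>UNIV-{k}-{l}. C$i$p i)"

lemma Q2_eq: "Q2 M x = (\<Sum>k\<in>UNIV. \<Sum>l\<in>UNIV-{k}. \<Sum>p\<in>Perms.
    W (mat x - M) p k l * (if k = p k \<and> l = p l then 1 else 0))"
proof -
  have "Q2 M x = (\<Sum>p\<in>Perms. \<Sum>k\<in>UNIV. \<Sum>l\<in>UNIV-{k}.
    W (mat x - M) p k l * (if k = p k \<and> l = p l then 1 else 0))"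
    unfolding Q2_def lp2_def lp1_def lp_def mat_entry W_def sum_distrib_left
    by (intro sum.cong refl) auto
  also have "\<dots> = (\<Sum>k\<in>UNIV. \<Sum>p\<in>Perms. \<Sum>l\<in>UNIV-{k}.
    W (mat x - M) p k l * (if k = p k \<and> l = p l then 1 else 0))"
    by (rule sum.swap)
  also have "\<dots> = (\<Sum>k\<in>UNIV. \<Sum>l\<in>UNIV-{k}. \<Sum>p\<in>Perms.
    W (mat x - M) p k l * (if k = p k \<and> l = p l then 1 else 0))"
    by (rule sum.cong[OF refl], rule sum.swap)
  finally show ?thesis .
qed

lemma lap_eq: "lapsum (\<lambda>H. Fd2 C H 0) = (\<Sum>k\<in>UNIV. \<Sum>l\<in>UNIV-{k}. \<Sum>p\<in>Perms.
    W C p k l * (if k = p l \<and> p k = l then 1 else 0))"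
proof -
  have "lapsum (\<lambda>H. Fd2 C H 0) = (\<Sum>p\<in>Perms. \<Sum>k\<in>UNIV. \<Sum>l\<in>UNIV-{k}.
    W C p k l * (if k = p l \<and> p k = l then 1 else 0))"
    unfolding Fd2_0 W_def by (rule lapsum_quad)
  also have "\<dots> = (\<Sum>k\<in>UNIV. \<Sum>p\<in>Perms. \<Sum>l\<in>UNIV-{k}.
    W C p k l * (if k = p l \<and> p k = l then 1 else 0))"
    by (rule sum.swap)
  also have "\<dots> = (\<Sum>k\<in>UNIV. \<Sum>l\<in>UNIV-{k}. \<Sum>p\<in>Perms.
    W C p k l * (if k = p l \<and> p k = l then 1 else 0))"
    by (rule sum.cong[OF refl], rule sum.swap)
  finally show ?thesis .
qed

lemma perm_reindex:
  fixes k l :: "'n::finite"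
  shows "(\<Sum>p\<in>Perms. F p) = (\<Sum>q\<in>(Perms::('n\<Rightarrow>'n) set). F (q \<circ> Transposition.transpose k l))"
proof (rule sum.reindex_bij_witness[of _ "\<lambda>q. q \<circ> Transposition.transpose k l" "\<lambda>q. q \<circ> Transposition.transpose k l"])
  have t: "Transposition.transpose k l permutes (UNIV::'n set)" by (rule permutes_swap_id) auto
  fix a :: "'n \<Rightarrow> 'n"
  show "a \<circ> Transposition.transpose k l \<circ> Transposition.transpose k l = a"
    by (simp add: o_assoc[symmetric])
  show "a \<in> Perms \<Longrightarrow> a \<circ> Transposition.transpose k l \<in> Perms"
    using permutes_compose[OF t] by auto
  show "F (a \<circ> Transposition.transpose k l \<circ> Transposition.transpose k l) = F a"
    by (simp add: o_assoc[symmetric])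
qed (auto simp: o_assoc[symmetric] intro!: permutes_compose permutes_swap_id)

lemma W_swap:
  fixes k l :: "'n::finite"
  assumes "k \<noteq> l" "q \<in> Perms"
  shows "W C (q \<circ> Transposition.transpose k l) k l = - W C q k l"
proof -
  have t: "Transposition.transpose k l permutes (UNIV::'n set)" by (rule permutes_swap_id) auto
  have "sign (q \<circ> Transposition.transpose k l) = sign q * sign (Transposition.transpose k l)"
  proof (rule sign_compose)
    show "permutation q" using assms(2) by (intro permutes_imp_permutation[of UNIV]) auto
    show "permutation (Transposition.transpose k l)" by (rule permutation_swap_id)
  qed
  also have "\<dots> = - sign q" using assms by (simp add: sign_swap_id)
  finally have s: "sign (q \<circ> Transposition.transpose k l) = - sign q" .
  have p: "(\<Prod>i\<in>UNIV-{k}-{l}. C$i$((q \<circ> Transposition.transpose k l) i)) = (\<Prod>i\<in>UNIV-{k}-{l}. C$i$(q i))"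
    by (rule prod.cong) auto
  show ?thesis unfolding W_def s p by simp
qed

lemma lap_Q2: "lapsum (\<lambda>H. Fd2 (mat x - M) H 0) = - Q2 M x"
proof -
  have "(\<Sum>p\<in>Perms. W (mat x - M) p k l * (if k = p l \<and> p k = l then 1 else 0))
      = - (\<Sum>p\<in>Perms. W (mat x - M) p k l * (if k = p k \<and> l = p l then 1 else 0))"
    if "l \<in> UNIV - {k}" for k l
  proof -
    from that have kl: "k \<noteq> l" by auto
    have "(\<Sum>p\<in>Perms. W (mat x - M) p k l * (if k = p l \<and> p k = l then 1 else 0))
      = (\<Sum>q\<in>Perms. W (mat x - M) (q \<circ> Transposition.transpose k l) k l *
           (if k = (q \<circ> Transposition.transpose k l) l \<and> (q \<circ> Transposition.transpose k l) k = l then 1 else 0))"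
      by (rule perm_reindex)
    also have "\<dots> = (\<Sum>q\<in>Perms. - (W (mat x - M) q k l * (if k = q k \<and> l = q l then 1 else 0)))"
      by (rule sum.cong[OF refl]) (auto simp: W_swap[OF kl])
    finally show ?thesis by (simp add: sum_negf)
  qed
  note * = this
  have "lapsum (\<lambda>H. Fd2 (mat x - M) H 0) = (\<Sum>k\<in>UNIV. \<Sum>l\<in>UNIV-{k}.
     - (\<Sum>p\<in>Perms. W (mat x - M) p k l * (if k = p k \<and> l = p l then 1 else 0)))"
    unfolding lap_eq by (intro sum.cong refl *)
  then show ?thesis unfolding Q2_eq by (simp add: sum_negf)
qed



lemma gamma_sum:
  fixes A B :: "complex^'n^'n"
  shows "lapsum (\<lambda>H. Fd1 A H 0 * Fd1 B H 0) = (\<Sum>k\<in>UNIV. \<Sum>m\<in>UNIV. DD A m k * DD B k m)"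
proof -
  define Z where "Z = (\<lambda>m k (p::'n\<Rightarrow>'n) (q::'n\<Rightarrow>'n). tt A p m * tt B q k * (if m = q k \<and> p m = k then 1 else 0))"
  have "lapsum (\<lambda>H. Fd1 A H 0 * Fd1 B H 0) = (\<Sum>p\<in>Perms. \<Sum>m\<in>UNIV. \<Sum>q\<in>Perms. \<Sum>k\<in>UNIV. Z m k p q)"
    unfolding Fd1_0 lapsum_bilin Z_def by (intro sum.cong refl) simp
  also have "\<dots> = (\<Sum>m\<in>UNIV. \<Sum>p\<in>Perms. \<Sum>q\<in>Perms. \<Sum>k\<in>UNIV. Z m k p q)"
    by (rule sum.swap)
  also have "\<dots> = (\<Sum>m\<in>UNIV. \<Sum>p\<in>Perms. \<Sum>k\<in>UNIV. \<Sum>q\<in>Perms. Z m k p q)"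
    by (rule sum.cong[OF refl], rule sum.cong[OF refl], rule sum.swap)
  also have "\<dots> = (\<Sum>m\<in>UNIV. \<Sum>k\<in>UNIV. \<Sum>p\<in>Perms. \<Sum>q\<in>Perms. Z m k p q)"
    by (rule sum.cong[OF refl], rule sum.swap)
  also have "\<dots> = (\<Sum>m\<in>UNIV. \<Sum>k\<in>UNIV. DD A m k * DD B k m)"
    unfolding DD_def sum_product Z_def by (intro sum.cong refl) auto
  also have "\<dots> = (\<Sum>k\<in>UNIV. \<Sum>m\<in>UNIV. DD A m k * DD B k m)"
    by (rule sum.swap)
  finally show ?thesis .
qed

theorem proposition5p5:
  fixes M :: "complex^'n^'n" and X Y :: complex
  assumes "hermitian M" and "X \<noteq> Y"
  shows "carre_du_champ (charpoly_fun X) (charpoly_fun Y) M =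
           (deriv (\<lambda>x. charpoly_fun x M) X * charpoly_fun Y M
            - deriv (\<lambda>x. charpoly_fun x M) Y * charpoly_fun X M) / (Y - X)
         \<and> hlaplacian (charpoly_fun X) M = - deriv (deriv (\<lambda>x. charpoly_fun x M)) X"
proof
  have hl: "hlaplacian (charpoly_fun x) M = lapsum (\<lambda>H. Fd2 (mat x - M) H 0)" for x
    unfolding hlap_lapsum dir_d2_charpoly ..
  show "hlaplacian (charpoly_fun X) M = - deriv (deriv (\<lambda>x. charpoly_fun x M)) X"
    unfolding hl lap_Q2 cp_deriv2 ..
  let ?A = "mat X - M" and ?B = "mat Y - M"
  have cA: "charpoly_fun X M = det ?A" and cB: "charpoly_fun Y M = det ?B"
    unfolding charpoly_fun_def by simp_all
  have "hlaplacian (\<lambda>N. charpoly_fun X N * charpoly_fun Y N) M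
      = lapsum (\<lambda>H. det ?B * Fd2 ?A H 0 + 2 * (Fd1 ?A H 0 * Fd1 ?B H 0) + det ?A * Fd2 ?B H 0)"
    unfolding hlap_lapsum dir_d2_charpoly2 Fd_0 by (simp add: mult_ac)
  also have "\<dots> = det ?B * hlaplacian (charpoly_fun X) M + 2 * lapsum (\<lambda>H. Fd1 ?A H 0 * Fd1 ?B H 0)
      + det ?A * hlaplacian (charpoly_fun Y) M"
    unfolding hl lapsum_add lapsum_cmult ..
  finally have "carre_du_champ (charpoly_fun X) (charpoly_fun Y) M = lapsum (\<lambda>H. Fd1 ?A H 0 * Fd1 ?B H 0)"
    unfolding carre_du_champ_def cA cB by simp
  also have "\<dots> = (\<Sum>k\<in>UNIV. \<Sum>m\<in>UNIV. DD ?A m k * DD ?B k m)"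
    by (rule gamma_sum)
  also have "\<dots> = (det ?B * (\<Sum>k\<in>UNIV. DD ?A k k) - det ?A * (\<Sum>k\<in>UNIV. DD ?B k k)) / (Y - X)"
    using gamma_adj[of Y X M] assms(2) by (simp add: field_simps)
  also have "\<dots> = (deriv (\<lambda>x. charpoly_fun x M) X * charpoly_fun Y M
            - deriv (\<lambda>x. charpoly_fun x M) Y * charpoly_fun X M) / (Y - X)"
    unfolding cp_deriv Q1_eq cA cB by (simp add: mult_ac)
  finally show "carre_du_champ (charpoly_fun X) (charpoly_fun Y) M =
           (deriv (\<lambda>x. charpoly_fun x M) X * charpoly_fun Y M
            - deriv (\<lambda>x. charpoly_fun x M) Y * charpoly_fun X M) / (Y - X)" .
qed

end
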